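(* There exists a frameless $2$-coloring of the infinite plane lattice $\mathbb{Z}\times\mathbb{Z}$; that is, there is a map $f:\mathbb{Z}\times\mathbb{Z}\to\Delta$ with $|\Delta|=2$ such that there do not exist integers $m,n$ and integers $p,q\ge 1$ with $f(m,n+i)=f(m+p,n+i)$ for all $0\le i\le q$ and $f(m+j,n)=f(m+j,n+q)$ for all $0\le j\le p$.
   Context: A coloring of $\mathbb{Z}\times\mathbb{Z}$ is a map into a finite set $\Delta$ of colors; a $k$-coloring uses $|\Delta|=k$. A picture frame in a coloring $f$ is a finite rectangular block $\{m,\dots,m+p\}\times\{n,\dots,n+q\}$ with $p,q\ge1$ whose first and last rows agree and whose first and last columns agree, i.e. $f(m,n+i)=f(m+p,n+i)$ for $0\le i\le q$ and $f(m+j,n)=f(m+j,n+q)$ for $0\le j\le p$. A coloring is frameless if it contains no picture frame. *)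

theory Defs
  imports Main
begin

definition picture_frame :: "(int \<times> int \<Rightarrow> 'c) \<Rightarrow> int \<Rightarrow> int \<Rightarrow> int \<Rightarrow> int \<Rightarrow> bool" where
  "picture_frame f m n p q \<longleftrightarrow>
     p \<ge> 1 \<and> q \<ge> 1 \<and>
     (\<forall>i. 0 \<le> i \<and> i \<le> q \<longrightarrow> f (m, n + i) = f (m + p, n + i)) \<and>
     (\<forall>j. 0 \<le> j \<and> j \<le> p \<longrightarrow> f (m + j, n) = f (m + j, n + q))"

definition frameless :: "(int \<times> int \<Rightarrow> 'c) \<Rightarrow> bool" where
  "frameless f \<longleftrightarrow> \<not> (\<exists>m n p q. picture_frame f m n p q)"

end

theory Submission
  imports Defs
begin

fun tm :: "nat \<Rightarrow> bool" where
  "tm n = (if n = 0 then False else if even n then tm (n div 2) else \<not> tm (n div 2))"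

declare tm.simps[simp del]

lemma tm_even[simp]: "tm (2*n) = tm n"
  by (cases "n = 0") (simp_all add: tm.simps[of "2*n"] tm.simps[of 0])

lemma tm_odd[simp]: "tm (2*n+1) = (\<not> tm n)"
  by (subst tm.simps) simp

lemma tm_odd'[simp]: "tm (Suc (2*n)) = (\<not> tm n)"
  using tm_odd[of n] by simp

lemma tm_pow2: "n < 2^k \<Longrightarrow> tm (n + 2^k) = (\<not> tm n)"
proof (induction k arbitrary: n)
  case 0
  then show ?case using tm_odd[of 0] by simp
next
  case (Suc k)
  show ?case
  proof (cases "even n")
    case True
    then obtain m where m: "n = 2*m" by blast
    with Suc.prems have "m < 2^k" by simp
    have "n + 2^Suc k = 2*(m + 2^k)" using m by simp
    then show ?thesis using Suc.IH[OF \<open>m < 2^k\<close>] m by (simp only: tm_even)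
  next
    case False
    then obtain m where m: "n = 2*m+1" using oddE by blast
    with Suc.prems have "m < 2^k" by simp
    have eq: "n + 2^Suc k = 2*(m + 2^k) + 1" using m by simp
    have "tm (n + 2^Suc k) = (\<not> tm (m + 2^k))" unfolding eq by (rule tm_odd)
    also have "\<dots> = tm m" using Suc.IH[OF \<open>m < 2^k\<close>] by simp
    also have "\<dots> = (\<not> tm n)" unfolding m by (simp only: tm_odd) simp
    finally show ?thesis .
  qed
qed

lemma tm_cons:
  fixes z :: int
  assumes "- (4^k) \<le> z" "z < 4^k"
  shows "tm (nat (z + 4^Suc k)) = tm (nat (z + 4^k))"
proof -
  define u where "u = nat (z + 4^k)"
  have u: "int u = z + 4^k" using assms(1) unfolding u_def by simp
  have "int u < int (2 * 4^k)" using assms(2) u by simp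
  then have u2: "u < 2 * 4^k" by linarith
  have ee: "z + 4^Suc k = int (u + 3 * 4^k)" using u by simp
  have e: "nat (z + 4^Suc k) = u + 3 * 4^k" unfolding ee by (rule nat_int)
  have p4: "(4::nat)^k = 2^(2*k)" by (simp add: power_mult)
  show ?thesis
  proof (cases "u < 4^k")
    case True
    have a: "u + 3*4^k = (u + 2^(2*k)) + 2^(2*k+1)" using p4 by simp
    have b: "u + 2^(2*k) < 2^(2*k+1)" using True p4 by simp
    show ?thesis unfolding e a u_def[symmetric]
      using tm_pow2[OF b] tm_pow2[of u "2*k"] True p4 by simp
  next
    case False
    then obtain v where v: "u = 4^k + v" "v < 4^k" using u2
      by (metis add_diff_inverse_nat add_less_imp_less_left mult_2)
    have a: "u + 3*4^k = v + 2^(2*(Suc k))" using v p4 by simp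
    have b: "v < 2^(2*(Suc k))" using v p4 by simp
    have c: "u = v + 2^(2*k)" using v p4 by simp
    show ?thesis unfolding e a u_def[symmetric] c
      using tm_pow2[OF b] tm_pow2[of v "2*k"] v p4 by (simp add: add.commute)
  qed
qed

lemma tm_cons2:
  fixes z :: int
  assumes "\<bar>z\<bar> < 4^k" "k \<le> k'"
  shows "tm (nat (z + 4^k')) = tm (nat (z + 4^k))"
  using assms(2)
proof (induction k' rule: dec_induct)
  case base
  then show ?case by simp
next
  case (step k')
  have "(4::int)^k \<le> 4^k'" using step(1) by (simp add: power_increasing)
  then have "- (4^k') \<le> z" "z < 4^k'" using assms(1) by linarith+
  then show ?case using tm_cons step by simp
qed

definition g :: "int \<Rightarrow> bool" where
  "g z = tm (nat (z + 4^(nat \<bar>z\<bar>)))"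

lemma pow4_gt: "int n < 4^n"
proof -
  have "n < 2^n" by (rule less_exp)
  also have "(2::nat)^n \<le> 4^n" by (simp add: power_mono)
  finally have "n < 4^n" .
  then show ?thesis by (metis of_nat_less_iff of_nat_numeral of_nat_power)
qed

lemma g_eq:
  assumes "\<bar>z\<bar> < 4^k"
  shows "g z = tm (nat (z + 4^k))"
proof -
  let ?k0 = "nat \<bar>z\<bar>"
  have h0: "\<bar>z\<bar> < 4^?k0" using pow4_gt[of ?k0] by simp
  have "tm (nat (z + 4^(max k ?k0))) = tm (nat (z + 4^?k0))" by (rule tm_cons2[OF h0]) simp
  moreover have "tm (nat (z + 4^(max k ?k0))) = tm (nat (z + 4^k))" by (rule tm_cons2[OF assms]) simp
  ultimately show ?thesis unfolding g_def by simp
qed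

lemma window:
  fixes a :: int and L :: nat
  shows "\<exists>b. \<forall>j\<le>L. g (a + int j) = tm (b + j)"
proof -
  define k where "k = nat \<bar>a\<bar> + L"
  have K: "int k < 4^k" by (rule pow4_gt)
  have ka: "\<bar>a\<bar> + int L = int k" unfolding k_def by simp
  show ?thesis
  proof (intro exI allI impI)
    fix j assume "j \<le> L"
    then have "\<bar>a + int j\<bar> < 4^k" using K ka by linarith
    then have "g (a + int j) = tm (nat (a + int j + 4^k))" by (rule g_eq)
    moreover have "nat (a + int j + 4^k) = nat (a + 4^k) + j"
      using K ka by linarith
    ultimately show "g (a + int j) = tm (nat (a + 4^k) + j)" by simp
  qed
qed

lemma tm_even_neq: "even i \<Longrightarrow> tm i \<noteq> tm (i+1)"
  by (auto elim!: evenE)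

lemma no_eq3: "\<not> (tm t = tm (t+1) \<and> tm (t+1) = tm (t+2))"
proof (cases "even t")
  case True then show ?thesis using tm_even_neq[of t] by auto
next
  case False
  then have "even (t+1)" by simp
  then show ?thesis using tm_even_neq[of "t+1"] by (auto simp: add.assoc)
qed

lemma alt5: "\<exists>i. a \<le> i \<and> i + 1 \<le> a + 4 \<and> tm i = tm (i+1)"
proof (rule ccontr)
  assume H: "\<not> ?thesis"
  have H': "\<And>i. a \<le> i \<Longrightarrow> i+1 \<le> a+4 \<Longrightarrow> tm i \<noteq> tm (i+1)" using H by blast
  obtain b where b: "a = 2*b \<or> a = 2*b+1" by (metis oddE evenE)
  have x1: "tm (2*b+1) \<noteq> tm (2*b+1+1)" by (rule H') (use b in auto)
  have "2*b+1+1 = 2*(b+1)" by simp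
  with x1 have "tm (2*b+1) \<noteq> tm (2*(b+1))" by metis
  then have e1: "tm b = tm (b+1)" unfolding tm_odd tm_even by blast
  have x2: "tm (2*(b+1)+1) \<noteq> tm (2*(b+1)+1+1)" by (rule H') (use b in auto)
  have "2*(b+1)+1+1 = 2*(b+2)" by simp
  with x2 have "tm (2*(b+1)+1) \<noteq> tm (2*(b+2))" by metis
  then have e2: "tm (b+1) = tm (b+2)" unfolding tm_odd tm_even by blast
  have "b+2 = b+1+1" by simp
  then show False using no_eq3[of b] e1 e2 by metis
qed

lemma tm_eq_odd: "tm i = tm (i+1) \<Longrightarrow> odd i"
  using tm_even_neq by blast

lemma overlap_free:
  "\<not> (p \<ge> 1 \<and> (\<forall>t. a \<le> t \<and> t \<le> a + p \<longrightarrow> tm t = tm (t+p)))"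
proof (induction p arbitrary: a rule: less_induct)
  case (less p)
  show ?case
  proof
    assume A: "1 \<le> p \<and> (\<forall>t. a \<le> t \<and> t \<le> a + p \<longrightarrow> tm t = tm (t+p))"
    then have P: "\<And>t. a \<le> t \<Longrightarrow> t \<le> a + p \<Longrightarrow> tm t = tm (t+p)" by blast
    show False
    proof (cases "p = 1")
      case True
      then show False using P[of a] P[of "a+1"] no_eq3[of a] by (simp add: add.assoc)
    next
      case p1: False
      show False
      proof (cases "even p")
        case False
        then have p3: "p \<ge> 3" using p1 A by presburger
        obtain i where i: "a \<le> i" "i + 1 \<le> a + 4" "tm i = tm (i+1)" using alt5 by blast
        have "\<exists>j. odd j \<and> odd (j + p)"
        proof (cases "i + 1 \<le> a + p")
          case True
          have "tm (i+p) = tm (i+p+1)" using P[of i] P[of "i+1"] True i by simp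
          then show ?thesis using i tm_eq_odd by blast
        next
          case c: False
          define j where "j = i - p"
          have ij: "i = j + p" using c unfolding j_def by simp
          have "tm j = tm (j+1)" using P[of j] P[of "j+1"] ij c i p3 by simp
          then show ?thesis using i tm_eq_odd ij by metis
        qed
        then show False using False by auto
      next
        case True
        then obtain r where r: "p = 2*r" by blast
        have r1: "r \<ge> 1" "r < p" using r A by auto
        define b where "b = a div 2"
        have "\<forall>s. b \<le> s \<and> s \<le> b + r \<longrightarrow> tm s = tm (s+r)"
        proof (intro allI impI)
          fix s assume s: "b \<le> s \<and> s \<le> b + r"
          show "tm s = tm (s+r)"
          proof (cases "even a")
            case True
            then have "a = 2*b" unfolding b_def by simp
            then have "tm (2*s) = tm (2*s + p)" using P[of "2*s"] s r by simp
            moreover have "2*s + p = 2*(s+r)" using r by simp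
            ultimately show ?thesis by (metis tm_even)
          next
            case False
            then have "a = 2*b+1" unfolding b_def by presburger
            then have "tm (2*s+1) = tm (2*s+1 + p)" using P[of "2*s+1"] s r by simp
            moreover have "2*s+1+p = 2*(s+r)+1" using r by simp
            ultimately have "tm (2*s+1) = tm (2*(s+r)+1)" by metis
            then show ?thesis unfolding tm_odd by blast
          qed
        qed
        then show False using less.IH[OF r1(2), of b] r1 by blast
      qed
    qed
  qed
qed

theorem theorem2:
  shows "\<exists>f :: int \<times> int \<Rightarrow> bool. frameless f"
proof
  let ?f = "\<lambda>(x::int, y::int). g (x + y)"
  show "frameless ?f"
    unfolding frameless_def
  proof
    assume "\<exists>m n p q. picture_frame ?f m n p q"
    then obtain m n p q where F: "picture_frame ?f m n p q" by blast
    define r where "r = min p q"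
    define c where "c = m + n"
    have r1: "r \<ge> 1" using F unfolding picture_frame_def r_def by simp
    have E: "\<And>i. 0 \<le> i \<Longrightarrow> i \<le> r \<Longrightarrow> g (c + i) = g (c + i + r)"
    proof -
      fix i :: int assume i: "0 \<le> i" "i \<le> r"
      show "g (c + i) = g (c + i + r)"
      proof (cases "p \<le> q")
        case True
        then have "r = p" unfolding r_def by simp
        then have "i \<le> q" using i True by simp
        then have "?f (m, n + i) = ?f (m + p, n + i)"
          using F i unfolding picture_frame_def by blast
        then show ?thesis using \<open>r = p\<close> unfolding c_def by (simp add: algebra_simps)
      next
        case False
        then have "r = q" unfolding r_def by simp
        then have "i \<le> p" using i False by simp
        then have "?f (m + i, n) = ?f (m + i, n + q)"
          using F i unfolding picture_frame_def by blast
        then show ?thesis using \<open>r = q\<close> unfolding c_def by (simp add: algebra_simps)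
      qed
    qed
    obtain b where b: "\<forall>j\<le>2 * nat r. g (c + int j) = tm (b + j)" using window by blast
    have "\<forall>t. b \<le> t \<and> t \<le> b + nat r \<longrightarrow> tm t = tm (t + nat r)"
    proof (intro allI impI)
      fix t assume t: "b \<le> t \<and> t \<le> b + nat r"
      define j where "j = t - b"
      have j: "j \<le> nat r" "t = b + j" using t unfolding j_def by auto
      have "g (c + int j) = g (c + int j + r)" using E[of "int j"] j r1 by simp
      moreover have "g (c + int j) = tm (b + j)" using b j by simp
      moreover have "j + nat r \<le> 2 * nat r" using j by simp
      then have "g (c + int (j + nat r)) = tm (b + (j + nat r))" using b by blast
      moreover have "c + int (j + nat r) = c + int j + r" using r1 by simp
      ultimately show "tm t = tm (t + nat r)" using j by (simp add: add.assoc)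
    qed
    then show False using overlap_free[of "nat r" b] r1 by simp
  qed
qed

end
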